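(* Let $m,n\ge 1$. For $i=1,\ldots,m$ let $f_i:\mathbb{R}^n\to\mathbb{R}$ be convex and let $h_i:\mathbb{R}^n\to\mathbb{R}$ be convex and differentiable with $\nabla h_i$ Lipschitz continuous with constant $L_i>0$; put $F:=\sum_{i=1}^m(f_i+h_i)$. Let $g:\mathbb{R}^n\to\mathbb{R}$ be convex and differentiable with $\nabla g$ Lipschitz continuous with constant $L_g>0$, and assume $\min g=0$. Let $\mathcal{S}$ be the (assumed nonempty) solution set of $\min\{F(x):x\in\arg\min g\}$. Let $(\alpha_k)_{k\ge1}$, $(\beta_k)_{k\ge1}$ be positive sequences, $x_1\in\mathbb{R}^n$, and for $k\ge1$ define $$\varphi_{1,k}:=x_k-\alpha_k\beta_k\nabla g(x_k),\qquad \varphi_{i+1,k}:=\operatorname{prox}_{\alpha_k f_i}\big(\varphi_{i,k}-\alpha_k\nabla h_i(\varphi_{i,k})\big)\ (i=1,\ldots,m),\qquad x_{k+1}:=\varphi_{m+1,k}.$$ Assume (H1) $\partial\big(\sum_{i=1}^m f_i+\delta_{\arg\min g}\big)=\sum_{i=1}^m\partial f_i+N_{\arg\min g}$; (H2) $\sum_k\alpha_k=+\infty$, $\sum_k\alpha_k^2<+\infty$; (H3) $0<\liminf_k\alpha_k\beta_k\le\limsup_k\alpha_k\beta_k<2/L_g$; (H4) for every $p\in\operatorname{ran}(N_{\arg\min g})$, $\sum_k\alpha_k\beta_k[g^*(p/\beta_k)-\sigma_{\arg\min g}(p/\beta_k)]<+\infty$. Then: (i) $(x_k)_{k\ge1}$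 is quasi-Fejér monotone relative to $\mathcal{S}$; (ii) for each $u\in\mathcal{S}$ the limit $\lim_{k\to\infty}\|x_k-u\|$ exists, and $\sum_{k=1}^\infty\alpha_k\beta_k g(x_k)<+\infty$, $\sum_{k=1}^\infty\alpha_k\beta_k\|\nabla g(x_k)\|^2<+\infty$, and $\sum_{k=1}^\infty\sum_{i=1}^m\|\varphi_{i+1,k}-\varphi_{i,k}\|^2<+\infty$; (iii) $\lim_{k\to\infty}g(x_k)=\lim_{k\to\infty}\|\nabla g(x_k)\|=\lim_{k\to\infty}\sum_{i=1}^m\|\varphi_{i+1,k}-\varphi_{i,k}\|^2=\lim_{k\to\infty}\|x_k-\varphi_{1,k}\|=0$; (iv) every sequential cluster point of $(x_k)_{k\ge1}$ lies in $\arg\min g$.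
   Context: A sequence $(x_k)_{k\ge1}\subset\mathbb{R}^n$ is quasi-Fejér monotone relative to a nonempty set $C\subset\mathbb{R}^n$ if for each $c\in C$ there exist a sequence $(\delta_k)_{k\ge1}\subset[0,+\infty)$ with $\sum_{k=1}^\infty\delta_k<+\infty$ and $k_0\in\mathbb{N}$ such that $\|x_{k+1}-c\|^2\le\|x_k-c\|^2+\delta_k$ for all $k\ge k_0$. For $r>0$ and convex $f$, $\operatorname{prox}_{rf}(x)$ is the unique minimizer of $u\mapsto f(u)+\frac{1}{2r}\|u-x\|^2$. $g^*$ is the Fenchel conjugate of $g$. For a nonempty set $X$, $\delta_X$ is the indicator function, $N_X(x)=\{w:\langle w,y-x\rangle\le0\ \forall y\in X\}$ for $x\in X$ the normal cone, $\operatorname{ran}(N_X)=\bigcup_{x\in X}N_X(x)$, and $\sigma_X(w)=\sup_{y\in X}\langle y,w\rangle$ the support function. *)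

theory Defs
  imports "HOL-Analysis.Analysis"
begin

definition argmin_set :: "('a \<Rightarrow> real) \<Rightarrow> 'a set" where
  "argmin_set g = {x. \<forall>y. g x \<le> g y}"

definition prox :: "real \<Rightarrow> ('a::real_normed_vector \<Rightarrow> real) \<Rightarrow> 'a \<Rightarrow> 'a" where
  "prox r f x = (THE u. \<forall>v. f u + norm (u - x)^2 / (2*r) \<le> f v + norm (v - x)^2 / (2*r))"

definition indicator_fun :: "'a set \<Rightarrow> 'a \<Rightarrow> ereal" where
  "indicator_fun X x = (if x \<in> X then 0 else \<infinity>)"

definition subdiff :: "('a::real_inner \<Rightarrow> ereal) \<Rightarrow> 'a \<Rightarrow> 'a set" where
  "subdiff f x = {w. \<bar>f x\<bar> \<noteq> \<infinity> \<and> (\<forall>y. f x + ereal (w \<bullet> (y - x)) \<le> f y)}"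

definition normal_cone :: "'a::real_inner set \<Rightarrow> 'a \<Rightarrow> 'a set" where
  "normal_cone X x = (if x \<in> X then {w. \<forall>y\<in>X. w \<bullet> (y - x) \<le> 0} else {})"

definition fconj :: "('a::real_inner \<Rightarrow> real) \<Rightarrow> 'a \<Rightarrow> ereal" where
  "fconj g p = (SUP x. ereal (p \<bullet> x - g x))"

definition support_fun :: "'a::real_inner set \<Rightarrow> 'a \<Rightarrow> ereal" where
  "support_fun X w = (SUP y\<in>X. ereal (y \<bullet> w))"

text \<open>Quasi-Fejer monotonicity (sequence indexed from 0 here).\<close>
definition quasi_fejer :: "(nat \<Rightarrow> 'a::real_normed_vector) \<Rightarrow> 'a set \<Rightarrow> bool" where
  "quasi_fejer x C \<longleftrightarrow> (\<forall>c\<in>C. \<exists>\<delta>::nat \<Rightarrow> real. (\<forall>k. \<delta> k \<ge> 0) \<and> summable \<delta> \<and>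
      (\<exists>k0. \<forall>k\<ge>k0. norm (x (Suc k) - c)^2 \<le> norm (x k - c)^2 + \<delta> k))"

end

theory Submission
  imports Defs
begin


lemma line_deriv:
  fixes h :: "'a::real_inner \<Rightarrow> real"
  assumes "\<forall>y. (h has_derivative (\<lambda>v. D y \<bullet> v)) (at y)"
  shows "((\<lambda>t. h (x + t *\<^sub>R d)) has_real_derivative (D (x + t *\<^sub>R d) \<bullet> d)) (at t)"
proof -
  have l: "((\<lambda>t. x + t *\<^sub>R d) has_derivative (\<lambda>s. s *\<^sub>R d)) (at t)"
    by (auto intro!: derivative_eq_intros)
  have "((\<lambda>t. h (x + t *\<^sub>R d)) has_derivative (\<lambda>s. D (x + t *\<^sub>R d) \<bullet> (s *\<^sub>R d))) (at t)"
    using has_derivative_compose[OF l assms[rule_format, of "x + t *\<^sub>R d"]] by simp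
  then show ?thesis
    by (simp add: has_field_derivative_def mult.commute[of _ "D (x + t *\<^sub>R d) \<bullet> d"])
qed

lemma grad_ineq:
  fixes h :: "'a::real_inner \<Rightarrow> real"
  assumes c: "convex_on UNIV h" and d: "\<forall>y. (h has_derivative (\<lambda>v. D y \<bullet> v)) (at y)"
  shows "h y \<ge> h x + D x \<bullet> (y - x)"
proof -
  let ?p = "\<lambda>t. h (x + t *\<^sub>R (y - x))"
  have cp: "convex_on UNIV ?p"
  proof (rule convex_onI)
    fix t u a :: real assume "0 < a" "a < 1"
    have "x + ((1 - a) *\<^sub>R t + a *\<^sub>R u) *\<^sub>R (y - x) = (1 - a) *\<^sub>R (x + t *\<^sub>R (y - x)) + a *\<^sub>R (x + u *\<^sub>R (y - x))"
      by (simp add: algebra_simps)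
    then show "?p ((1 - a) *\<^sub>R t + a *\<^sub>R u) \<le> (1 - a) * ?p t + a * ?p u"
      using convex_onD[OF c, of a "x + t *\<^sub>R (y - x)" "x + u *\<^sub>R (y - x)"] \<open>0 < a\<close> \<open>a < 1\<close> by auto
  qed simp
  have "?p 1 - ?p 0 \<ge> (D (x + 0 *\<^sub>R (y - x)) \<bullet> (y - x)) * (1 - 0)"
    by (rule convex_on_imp_above_tangent[OF cp]) (use line_deriv[OF d, of x "y - x" 0] in auto)
  then show ?thesis by simp
qed

lemma descent:
  fixes h :: "'a::real_inner \<Rightarrow> real"
  assumes d: "\<forall>y. (h has_derivative (\<lambda>v. D y \<bullet> v)) (at y)" and l: "L-lipschitz_on UNIV D"
  shows "h y \<le> h x + D x \<bullet> (y - x) + L / 2 * (norm (y - x))^2"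
proof -
  let ?d = "y - x"
  define p where "p = (\<lambda>t. h (x + t *\<^sub>R ?d) - t * (D x \<bullet> ?d) - L / 2 * t^2 * (norm ?d)^2)"
  have der: "(p has_real_derivative (D (x + t *\<^sub>R ?d) \<bullet> ?d - D x \<bullet> ?d - L * t * (norm ?d)^2)) (at t)" for t
    unfolding p_def
    by (auto intro!: derivative_eq_intros line_deriv[OF d])
  obtain z where z: "0 < z" "z < 1" "p 1 - p 0 = (1 - 0) * (D (x + z *\<^sub>R ?d) \<bullet> ?d - D x \<bullet> ?d - L * z * (norm ?d)^2)"
    using MVT2[of 0 1 p "\<lambda>t. D (x + t *\<^sub>R ?d) \<bullet> ?d - D x \<bullet> ?d - L * t * (norm ?d)^2"] der by auto
  have "D (x + z *\<^sub>R ?d) \<bullet> ?d - D x \<bullet> ?d = (D (x + z *\<^sub>R ?d) - D x) \<bullet> ?d" by (simp add: inner_diff_left field_simps)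
  also have "\<dots> \<le> norm (D (x + z *\<^sub>R ?d) - D x) * norm ?d" by (rule norm_cauchy_schwarz)
  also have "norm (D (x + z *\<^sub>R ?d) - D x) \<le> L * norm (z *\<^sub>R ?d)"
    using lipschitz_onD[OF l, of "x + z *\<^sub>R ?d" x] by (simp add: dist_norm)
  hence "norm (D (x + z *\<^sub>R ?d) - D x) * norm ?d \<le> L * norm (z *\<^sub>R ?d) * norm ?d"
    by (simp add: mult_right_mono)
  also have "\<dots> = L * z * (norm ?d)^2" using z by (simp add: power2_eq_square)
  finally have "p 1 - p 0 \<le> 0" using z by simp
  then show ?thesis unfolding p_def by (simp add: algebra_simps)
qed

lemma baillon:
  fixes g :: "'a::real_inner \<Rightarrow> real"
  assumes c: "convex_on UNIV g" and d: "\<forall>y. (g has_derivative (\<lambda>v. D y \<bullet> v)) (at y)"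
    and l: "L-lipschitz_on UNIV D" and L: "L > 0"
  shows "g y \<ge> g x + D x \<bullet> (y - x) + (norm (D y - D x))^2 / (2 * L)"
proof -
  define e where "e = D y - D x"
  define z where "z = y - (1 / L) *\<^sub>R e"
  have 1: "g z \<ge> g x + D x \<bullet> (z - x)" by (rule grad_ineq[OF c d])
  have 2: "g z \<le> g y + D y \<bullet> (z - y) + L / 2 * (norm (z - y))^2" by (rule descent[OF d l])
  have zy: "z - y = - (1 / L) *\<^sub>R e" by (simp add: z_def)
  have zx: "z - x = (y - x) - (1 / L) *\<^sub>R e" by (simp add: z_def)
  have a: "D y \<bullet> (z - y) = - (1/L) * (D y \<bullet> e)" by (simp add: zy)
  have b: "D x \<bullet> (z - x) = D x \<bullet> (y - x) - (1/L) * (D x \<bullet> e)" by (simp add: zx inner_diff_right)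
  have n: "(norm (z - y))^2 = (1/L)^2 * (norm e)^2" using L by (simp add: zy power_divide)
  have ee: "D y \<bullet> e - D x \<bullet> e = (norm e)^2" by (simp add: e_def power2_norm_eq_inner inner_diff_left)
  have "g x + D x \<bullet> (y - x) - (1/L) * (D x \<bullet> e) \<le> g y - (1/L) * (D y \<bullet> e) + L / 2 * ((1/L)^2 * (norm e)^2)"
  proof -
    from 2 have "g z \<le> g y - (1/L) * (D y \<bullet> e) + L / 2 * ((1/L)^2 * (norm e)^2)" by (simp only: a n)
    then show ?thesis using 1 b by linarith
  qed
  moreover have "L / 2 * ((1/L)^2 * (norm e)^2) = (norm e)^2 / (2 * L)"
    using L by (simp add: power2_eq_square field_simps)
  moreover have "(1/L) * (D y \<bullet> e) - (1/L) * (D x \<bullet> e) = (1/L) * (norm e)^2"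
    using ee by (metis right_diff_distrib)
  moreover have "(1/L) * (norm e)^2 - (norm e)^2 / (2 * L) = (norm e)^2 / (2 * L)"
    using L by (simp add: field_simps)
  ultimately show ?thesis unfolding e_def[symmetric] by linarith
qed

lemma grad_bound:
  fixes g :: "'a::real_inner \<Rightarrow> real"
  assumes d: "\<forall>y. (g has_derivative (\<lambda>v. D y \<bullet> v)) (at y)"
    and l: "L-lipschitz_on UNIV D" and L: "L > 0" and m: "\<forall>z. g z \<ge> m0"
  shows "g x - m0 \<ge> (norm (D x))^2 / (2 * L)"
proof -
  define z where "z = x - (1 / L) *\<^sub>R D x"
  have 2: "g z \<le> g x + D x \<bullet> (z - x) + L / 2 * (norm (z - x))^2" by (rule descent[OF d l])
  have zx: "z - x = - (1 / L) *\<^sub>R D x" by (simp add: z_def)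
  have "D x \<bullet> (z - x) = - (1/L) * (norm (D x))^2" by (simp add: zx power2_norm_eq_inner)
  moreover have "(norm (z - x))^2 = (1/L)^2 * (norm (D x))^2" using L by (simp add: zx power_divide)
  ultimately have "m0 \<le> g x - (1/L) * (norm (D x))^2 + L / 2 * ((1/L)^2 * (norm (D x))^2)"
    using 2 m[rule_format, of z] by (simp only:)
  then show ?thesis using L by (simp add: field_simps power2_eq_square)
qed

lemma small_t:
  fixes Q C :: real
  assumes "\<And>t. 0 < t \<Longrightarrow> t < 1 \<Longrightarrow> 0 \<le> Q + t * C" "C \<ge> 0"
  shows "0 \<le> Q"
proof (rule ccontr)
  assume "\<not> 0 \<le> Q"
  define t where "t = min (1/2) (- Q / (2 * (C + 1)))"
  have t: "0 < t" "t < 1" using \<open>\<not> 0 \<le> Q\<close> assms(2) by (auto simp: t_def field_simps)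
  have "t * C \<le> (- Q / (2 * (C + 1))) * C" using assms(2) by (intro mult_right_mono) (auto simp: t_def)
  also have "\<dots> < - Q / 2" using \<open>\<not> 0 \<le> Q\<close> assms(2) by (simp add: field_simps)
  finally show False using assms(1)[OF t] \<open>\<not> 0 \<le> Q\<close> by linarith
qed

lemma min_imp_subgrad:
  fixes f :: "'a::real_inner \<Rightarrow> real"
  assumes c: "convex_on UNIV f" and r: "r > 0"
    and mn: "\<forall>v. f u + norm (u - z)^2 / (2*r) \<le> f v + norm (v - z)^2 / (2*r)"
  shows "f v \<ge> f u + (z - u) \<bullet> (v - u) / r"
proof -
  have "0 \<le> (f v - f u + (u - z) \<bullet> (v - u) / r) + t * ((norm (v - u))^2 / (2 * r))"
    if t: "0 < t" "t < 1" for t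
  proof -
    define w where "w = (1 - t) *\<^sub>R u + t *\<^sub>R v"
    have fw: "f w \<le> (1 - t) * f u + t * f v" unfolding w_def using convex_onD[OF c, of t u v] t by simp
    have wz: "w - z = (u - z) + t *\<^sub>R (v - u)" by (simp add: w_def algebra_simps)
    have nw: "(norm (w - z))^2 = (norm (u - z))^2 + 2 * t * ((u - z) \<bullet> (v - u)) + t^2 * (norm (v - u))^2"
      unfolding wz power2_norm_eq_inner by (simp add: algebra_simps inner_commute power2_eq_square)
    have "f u + norm (u - z)^2 / (2*r) \<le> f w + norm (w - z)^2 / (2*r)" using mn by blast
    hence "f u + norm (u - z)^2 / (2*r) \<le> f w + norm (u - z)^2 / (2*r) + (2 * t * ((u - z) \<bullet> (v - u)) + t^2 * (norm (v - u))^2) / (2 * r)"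
      unfolding nw by (simp add: add_divide_distrib)
    hence "0 \<le> t * (f v - f u) + (2 * t * ((u - z) \<bullet> (v - u)) + t^2 * (norm (v - u))^2) / (2 * r)"
      using fw by (simp add: algebra_simps)
    hence "0 \<le> t * ((f v - f u + (u - z) \<bullet> (v - u) / r) + t * ((norm (v - u))^2 / (2 * r)))"
      using r by (simp add: field_simps power2_eq_square)
    then show ?thesis using t by (simp add: zero_le_mult_iff)
  qed
  hence "0 \<le> f v - f u + (u - z) \<bullet> (v - u) / r"
    by (rule small_t) (use r in auto)
  moreover have "(z - u) \<bullet> (v - u) / r = - ((u - z) \<bullet> (v - u) / r)" by (metis inner_minus_left minus_diff_eq minus_divide_left)
  ultimately show ?thesis by linarith
qed

lemma prox_exists:
  fixes f :: "'a::euclidean_space \<Rightarrow> real"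
  assumes c: "convex_on UNIV f" and r: "r > 0"
  shows "\<exists>u. \<forall>v. f u + norm (u - z)^2 / (2*r) \<le> f v + norm (v - z)^2 / (2*r)"
proof -
  have cont: "continuous_on UNIV f" by (rule convex_on_continuous[OF open_UNIV c])
  obtain m1 where m1: "m1 \<in> cball z 1" "\<forall>y\<in>cball z 1. f m1 \<le> f y"
    using continuous_attains_inf[of "cball z 1" f] cont compact_cball[of z 1]
    by (metis centre_in_cball continuous_on_subset empty_iff top_greatest zero_le_one)
  define M where "M = f m1"
  define K where "K = max 0 (f z - M)"
  have K: "K \<ge> 0" "M \<ge> f z - K" by (auto simp: K_def)
  have low: "f v \<ge> f z - K - norm (v - z) * K" for v
  proof (cases "norm (v - z) \<le> 1")
    case True
    then have "v \<in> cball z 1" by (simp add: dist_norm norm_minus_commute)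
    then have "f v \<ge> M" using m1 by (auto simp: M_def)
    moreover have "norm (v - z) * K \<ge> 0" using K by simp
    ultimately show ?thesis using K by linarith
  next
    case False
    define s where "s = norm (v - z)"
    have s: "s > 1" using False by (simp add: s_def)
    define w where "w = (1 - 1/s) *\<^sub>R z + (1/s) *\<^sub>R v"
    have wz: "w - z = (1/s) *\<^sub>R (v - z)" by (simp add: w_def algebra_simps)
    have "norm (w - z) = \<bar>1/s\<bar> * norm (v - z)" unfolding wz by simp
    also have "\<dots> = 1" using s by (simp add: s_def[symmetric])
    finally have "norm (w - z) = 1" .
    hence "w \<in> cball z 1" by (simp add: dist_norm norm_minus_commute)
    hence fw1: "M \<le> f w" using m1 by (auto simp: M_def)
    have fw2: "f w \<le> (1 - 1/s) * f z + (1/s) * f v"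
      unfolding w_def using convex_onD[OF c, of "1/s" z v] s by simp
    have "s * M \<le> s * ((1 - 1/s) * f z + (1/s) * f v)" using fw1 fw2 s by simp
    also have "\<dots> = (s - 1) * f z + f v" using s by (simp add: field_simps)
    finally have "f v \<ge> f z + s * (M - f z)" by (simp add: algebra_simps)
    moreover have "s * (M - f z) \<ge> s * (- K)" using K s by (intro mult_left_mono) auto
    ultimately show ?thesis using K s unfolding s_def[symmetric] by simp
  qed
  define \<Phi> where "\<Phi> = (\<lambda>v. f v + norm (v - z)^2 / (2*r))"
  define R where "R = 4 * r * K + 1"
  have far: "\<Phi> v > \<Phi> z" if "norm (v - z) > R" for v
  proof -
    define s where "s = norm (v - z)"
    have s: "s > 4 * r * K + 1" using that by (simp add: s_def R_def)
    have "s / (2 * r) - 2 * K > 0" using s r K by (simp add: field_simps)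
    moreover have "s > 0" using s r K by (smt (verit) mult_nonneg_nonneg)
    ultimately have "s * (s / (2 * r) - 2 * K) > 0" by simp
    moreover have "s * (s / (2 * r) - 2 * K) = s^2 / (2*r) - 2 * s * K" by (simp add: power2_eq_square algebra_simps)
    moreover have "4*r*K \<ge> 0" using r K by simp
    hence s1: "s \<ge> 1" using s by linarith
    hence "1 * K \<le> s * K" using K by (intro mult_right_mono) auto
    ultimately have "s^2 / (2*r) - s * K - K > 0" by linarith
    moreover have "\<Phi> v = f v + s^2/(2*r)" "\<Phi> z = f z" by (simp_all add: \<Phi>_def s_def)
    ultimately show ?thesis using low[of v, folded s_def] by linarith
  qed
  have contP: "continuous_on (cball z R) \<Phi>" unfolding \<Phi>_def
    by (intro continuous_intros continuous_on_subset[OF cont]) (use r in auto)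
  have "z \<in> cball z R" using K r by (simp add: R_def)
  then obtain u where u: "u \<in> cball z R" "\<forall>y\<in>cball z R. \<Phi> u \<le> \<Phi> y"
    using continuous_attains_inf[OF compact_cball _ contP] by blast
  have "\<Phi> u \<le> \<Phi> v" for v
  proof (cases "v \<in> cball z R")
    case True then show ?thesis using u by blast
  next
    case False
    then have "norm (v - z) > R" by (simp add: dist_norm norm_minus_commute)
    then show ?thesis using far[of v] u \<open>z \<in> cball z R\<close> by fastforce
  qed
  then show ?thesis unfolding \<Phi>_def by blast
qed

lemma prox_prop:
  fixes f :: "'a::euclidean_space \<Rightarrow> real"
  assumes c: "convex_on UNIV f" and r: "r > 0"
  shows "f v \<ge> f (prox r f z) + (z - prox r f z) \<bullet> (v - prox r f z) / r"
proof -
  let ?P = "\<lambda>u. \<forall>v. f u + norm (u - z)^2 / (2*r) \<le> f v + norm (v - z)^2 / (2*r)"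
  obtain u where u: "?P u" using prox_exists[OF c r] by blast
  have uniq: "u' = u" if "?P u'" for u'
  proof -
    have 1: "f u \<ge> f u' + (z - u') \<bullet> (u - u') / r" by (rule min_imp_subgrad[OF c r that])
    have 2: "f u' \<ge> f u + (z - u) \<bullet> (u' - u) / r" by (rule min_imp_subgrad[OF c r u])
    have "(z - u') \<bullet> (u - u') + (z - u) \<bullet> (u' - u) = (norm (u - u'))^2"
      by (simp add: power2_norm_eq_inner algebra_simps inner_commute)
    hence "(norm (u - u'))^2 / r = (z - u') \<bullet> (u - u') / r + (z - u) \<bullet> (u' - u) / r"
      by (metis add_divide_distrib)
    hence "0 \<ge> (norm (u - u'))^2 / r" using 1 2 by linarith
    hence "(norm (u - u'))^2 \<le> 0" using r by (simp add: divide_le_0_iff)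
    then show ?thesis by simp
  qed
  have "prox r f z = u" unfolding prox_def
    by (rule the_equality, rule u, rule uniq)
  then show ?thesis using min_imp_subgrad[OF c r u] by simp
qed
lemma polar2: "2 * ((q - p) \<bullet> (u - p)) = (norm (q - p))^2 + (norm (p - u))^2 - (norm (q - u))^2"
  for p q u :: "'a::real_inner"
  by (simp add: power2_norm_eq_inner inner_diff_left inner_diff_right inner_commute algebra_simps)

lemma inc_step:
  fixes f h :: "'a::euclidean_space \<Rightarrow> real"
  assumes fc: "convex_on UNIV f" and hc: "convex_on UNIV h"
    and hd: "\<forall>y. (h has_derivative (\<lambda>v. Dh y \<bullet> v)) (at y)" and hl: "L-lipschitz_on UNIV Dh"
    and a: "a > 0" and fw: "\<forall>y. f y \<ge> f u + w \<bullet> (y - u)"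
    and p: "p = prox a f (q - a *\<^sub>R Dh q)"
  shows "(norm (p - u))^2 \<le> (norm (q - u))^2 - (1 - a * L) * (norm (p - q))^2 + 2 * a * ((w + Dh u) \<bullet> (u - p))"
proof -
  define z where "z = q - a *\<^sub>R Dh q"
  have pr: "f u \<ge> f p + (z - p) \<bullet> (u - p) / a" unfolding p z_def by (rule prox_prop[OF fc a])
  have zp: "(z - p) \<bullet> (u - p) = (q - p) \<bullet> (u - p) - a * (Dh q \<bullet> (u - p))"
    by (simp add: z_def algebra_simps inner_diff_left)
  have pr2: "a * f u \<ge> a * f p + (q - p) \<bullet> (u - p) - a * (Dh q \<bullet> (u - p))"
  proof -
    have "a * f u \<ge> a * (f p + (z - p) \<bullet> (u - p) / a)" using pr a by simp
    also have "a * (f p + (z - p) \<bullet> (u - p) / a) = a * f p + (z - p) \<bullet> (u - p)" using a by (simp add: field_simps)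
    finally show ?thesis using zp by simp
  qed
  have g1: "h u \<ge> h q + Dh q \<bullet> (u - q)" by (rule grad_ineq[OF hc hd])
  have d1: "h p \<le> h q + Dh q \<bullet> (p - q) + L / 2 * (norm (p - q))^2" by (rule descent[OF hd hl])
  have split: "Dh q \<bullet> (u - p) = Dh q \<bullet> (u - q) - Dh q \<bullet> (p - q)" by (simp add: inner_diff_right)
  have hb: "Dh q \<bullet> (u - p) \<le> h u - h p + L / 2 * (norm (p - q))^2" using g1 d1 split by linarith
  have s1: "f p \<ge> f u + w \<bullet> (p - u)" using fw by blast
  have s2: "h p \<ge> h u + Dh u \<bullet> (p - u)" by (rule grad_ineq[OF hc hd])
  have cw: "(w + Dh u) \<bullet> (u - p) = - (w \<bullet> (p - u)) - Dh u \<bullet> (p - u)"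
    by (simp add: inner_add_left inner_diff_right)
  have "a * (Dh q \<bullet> (u - p)) \<le> a * (h u - h p + L / 2 * (norm (p - q))^2)"
    using hb a by simp
  hence A: "a * (Dh q \<bullet> (u - p)) \<le> a * h u - a * h p + a * L / 2 * (norm (p - q))^2"
    by (simp add: algebra_simps)
  have "a * (f u - f p + h u - h p) \<le> a * ((w + Dh u) \<bullet> (u - p))"
    using s1 s2 cw a by (intro mult_left_mono) auto
  hence B: "a * f u - a * f p + a * h u - a * h p \<le> a * ((w + Dh u) \<bullet> (u - p))"
    by (simp add: algebra_simps)
  have C: "(q - p) \<bullet> (u - p) \<le> a * ((w + Dh u) \<bullet> (u - p)) + a * L / 2 * (norm (p - q))^2"
    using pr2 A B by linarith
  have nq: "norm (q - p) = norm (p - q)" by (rule norm_minus_commute)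
  have e2: "2 * (a * L / 2 * (norm (p - q))^2) = a * L * (norm (p - q))^2" by simp
  have e3: "2 * (a * ((w + Dh u) \<bullet> (u - p))) = 2 * a * ((w + Dh u) \<bullet> (u - p))" by simp
  have "(norm (p - q))^2 + (norm (p - u))^2 - (norm (q - u))^2 \<le> 2 * a * ((w + Dh u) \<bullet> (u - p)) + a * L * (norm (p - q))^2"
    using C polar2[of q p u] e2 e3 unfolding nq by linarith
  moreover have "(1 - a * L) * (norm (p - q))^2 = (norm (p - q))^2 - a * L * (norm (p - q))^2" by (simp add: algebra_simps)
  ultimately show ?thesis by linarith
qed

lemma inc_chain:
  fixes f h :: "nat \<Rightarrow> 'a::euclidean_space \<Rightarrow> real"
  assumes fc: "\<forall>i\<in>{1..m}. convex_on UNIV (f i)" and hc: "\<forall>i\<in>{1..m}. convex_on UNIV (h i)"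
    and hd: "\<forall>i\<in>{1..m}. \<forall>y. (h i has_derivative (\<lambda>v. Dh i y \<bullet> v)) (at y)"
    and hl: "\<forall>i\<in>{1..m}. (L i)-lipschitz_on UNIV (Dh i)"
    and a: "a > 0" and fw: "\<forall>i\<in>{1..m}. \<forall>y. f i y \<ge> f i u + w i \<bullet> (y - u)"
    and ph: "\<forall>i\<in>{1..m}. \<phi> (i + 1) = prox a (f i) (\<phi> i - a *\<^sub>R Dh i (\<phi> i))"
  shows "(norm (\<phi> (m + 1) - u))^2 \<le> (norm (\<phi> 1 - u))^2
     - (\<Sum>i=1..m. (1 - a * L i) * (norm (\<phi> (i + 1) - \<phi> i))^2)
     + 2 * a * (\<Sum>i=1..m. (w i + Dh i u) \<bullet> (u - \<phi> (i + 1)))"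
proof -
  have st: "(norm (\<phi> (i + 1) - u))^2 - (norm (\<phi> i - u))^2 \<le>
      - ((1 - a * L i) * (norm (\<phi> (i + 1) - \<phi> i))^2) + 2 * a * ((w i + Dh i u) \<bullet> (u - \<phi> (i + 1)))"
    if i: "i \<in> {1..m}" for i
    using inc_step[of "f i" "h i" "Dh i" "L i" a u "w i" "\<phi> (i + 1)" "\<phi> i"] fc hc hd hl a fw ph i by auto
  have "(\<Sum>i=1..m. (norm (\<phi> (Suc i) - u))^2 - (norm (\<phi> i - u))^2) \<le>
     (\<Sum>i=1..m. - ((1 - a * L i) * (norm (\<phi> (i + 1) - \<phi> i))^2) + 2 * a * ((w i + Dh i u) \<bullet> (u - \<phi> (i + 1))))"
    using st by (intro sum_mono) simp
  also have "\<dots> = - (\<Sum>i=1..m. (1 - a * L i) * (norm (\<phi> (i + 1) - \<phi> i))^2)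
     + 2 * a * (\<Sum>i=1..m. (w i + Dh i u) \<bullet> (u - \<phi> (i + 1)))"
    by (simp add: sum_subtractf sum_distrib_left)
  finally show ?thesis
    using sum_Suc_diff[of 1 m "\<lambda>i. (norm (\<phi> i - u))^2"] by simp
qed

lemma H4_use:
  fixes g :: "'a::real_inner \<Rightarrow> real"
  assumes uX: "u \<in> X" and q: "q \<in> normal_cone X u" and g0: "\<forall>y\<in>X. g y = 0"
    and bpos: "\<forall>k\<ge>1. b k > 0" and \<beta>pos: "\<forall>k\<ge>1. \<beta> k > 0"
    and H: "(\<Sum>k. ereal (b (k + 1)) * (fconj g ((1 / \<beta> (k + 1)) *\<^sub>R q) - support_fun X ((1 / \<beta> (k + 1)) *\<^sub>R q))) < \<infinity>"
  shows "\<exists>G. (\<forall>k. G k \<ge> 0) \<and> summable (\<lambda>k. b (k + 1) * G (k + 1))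
          \<and> (\<forall>k\<ge>1. \<forall>y. ((1 / \<beta> k) *\<^sub>R q) \<bullet> (y - u) - g y \<le> G k)"
proof -
  define v where "v k = (1 / \<beta> k) *\<^sub>R q" for k
  have qn: "\<forall>y\<in>X. q \<bullet> (y - u) \<le> 0" using q uX by (simp add: normal_cone_def)
  have sup: "support_fun X (v k) = ereal (u \<bullet> v k)" if k: "k \<ge> 1" for k
  proof -
    have "y \<bullet> v k \<le> u \<bullet> v k" if "y \<in> X" for y
    proof -
      have q1: "q \<bullet> (y - u) \<le> 0" using qn that by blast
      have b1: "\<beta> k > 0" using \<beta>pos k by simp
      have "(1 / \<beta> k) * (q \<bullet> (y - u)) \<le> 0"
        using q1 b1 by (simp add: divide_nonpos_pos)
      then show ?thesis by (simp add: v_def inner_diff_right inner_commute algebra_simps)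
    qed
    then show ?thesis unfolding support_fun_def
      by (intro antisym SUP_least SUP_upper2[OF uX]) auto
  qed
  have cge: "fconj g (v k) \<ge> ereal (u \<bullet> v k)" for k
  proof -
    have "ereal (v k \<bullet> u - g u) \<le> fconj g (v k)" unfolding fconj_def by (rule SUP_upper) simp
    then show ?thesis using g0 uX by (simp add: inner_commute)
  qed
  define t where "t k = ereal (b (k + 1)) * (fconj g (v (k + 1)) - support_fun X (v (k + 1)))" for k
  have Ht: "(\<Sum>k. t k) \<noteq> \<infinity>" using H by (simp add: t_def v_def)
  have fin: "\<exists>r. fconj g (v (k + 1)) = ereal r \<and> t k = ereal (b (k + 1) * (r - u \<bullet> v (k + 1)))" for k
  proof -
    have bp: "b (k + 1) > 0" using bpos by simp
    have sk: "support_fun X (v (Suc k)) = ereal (u \<bullet> v (Suc k))" by (rule sup) simp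
    show ?thesis
    proof (cases "fconj g (v (k + 1))")
      case (real r)
      then show ?thesis by (simp add: t_def sk)
    next
      case PInf
      have tn: "t j \<ge> 0" for j
      proof -
        have bj: "b (j + 1) > 0" using bpos by simp
        have sj: "support_fun X (v (Suc j)) = ereal (u \<bullet> v (Suc j))" by (rule sup) simp
        have "fconj g (v (j + 1)) - ereal (u \<bullet> v (j + 1)) \<ge> 0"
          using cge[of "j + 1"] by (cases "fconj g (v (j + 1))") auto
        then show ?thesis using bj by (simp add: t_def sj)
      qed
      have "t k = \<infinity>" using PInf bp by (simp add: t_def sk)
      then show ?thesis using suminf_PInfty[OF tn Ht] by simp
    next
      case MInf
      then show ?thesis using cge[of "k + 1"] by simp
    qed
  qed
  define G where "G k = max 0 (real_of_ereal (fconj g (v k)) - u \<bullet> v k)" for k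
  have tG: "real_of_ereal (t k) = b (k + 1) * G (k + 1)" for k
  proof -
    obtain r where r: "fconj g (v (k + 1)) = ereal r" "t k = ereal (b (k + 1) * (r - u \<bullet> v (k + 1)))"
      using fin by blast
    have "r \<ge> u \<bullet> v (k + 1)" using cge[of "k + 1"] r by simp
    then show ?thesis using r by (simp add: G_def)
  qed
  have tn: "t j \<ge> 0" for j
  proof -
    obtain r where r: "fconj g (v (j + 1)) = ereal r" "t j = ereal (b (j + 1) * (r - u \<bullet> v (j + 1)))"
      using fin by blast
    have "r \<ge> u \<bullet> v (j + 1)" using cge[of "j + 1"] r by simp
    moreover have "b (j + 1) > 0" using bpos by simp
    ultimately show ?thesis using r by simp
  qed
  have summ: "summable (\<lambda>k. b (k + 1) * G (k + 1))"
    using summable_real_of_ereal[OF tn Ht] tG by simp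
  have bnd: "((1 / \<beta> k) *\<^sub>R q) \<bullet> (y - u) - g y \<le> G k" if k: "k \<ge> 1" for k y
  proof -
    obtain j where j: "k = j + 1" using k by (metis add.commute le_add_diff_inverse)
    obtain r where r: "fconj g (v k) = ereal r" using fin[of j] j by blast
    have "ereal (v k \<bullet> y - g y) \<le> fconj g (v k)" unfolding fconj_def by (rule SUP_upper) simp
    hence "v k \<bullet> y - g y \<le> r" using r by simp
    hence "v k \<bullet> (y - u) - g y \<le> r - u \<bullet> v k" by (simp add: inner_diff_right inner_commute)
    then show ?thesis using r by (simp add: G_def v_def)
  qed
  show ?thesis using summ bnd by (intro exI[of _ G]) (auto simp: G_def)
qed

lemma seq_lemma:
  fixes E P \<delta> :: "nat \<Rightarrow> real"
  assumes E0: "\<forall>k. E k \<ge> 0" and P0: "\<forall>k\<ge>K. P k \<ge> 0" and d0: "\<forall>k. \<delta> k \<ge> 0" and ds: "summable \<delta>"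
    and st: "\<forall>k\<ge>K. E (Suc k) \<le> E k - P k + \<delta> k"
  shows "convergent E" "summable P"
proof -
  define E' where "E' n = E (n + K)" for n
  define P' where "P' n = P (n + K)" for n
  define d' where "d' n = \<delta> (n + K)" for n
  have st': "E' (Suc n) \<le> E' n - P' n + d' n" for n
    using st by (simp add: E'_def P'_def d'_def)
  have ds': "summable d'" using ds unfolding d'_def by (subst summable_iff_shift)
  have ind: "E' n + (\<Sum>k<n. P' k) \<le> E' 0 + (\<Sum>k<n. d' k)" for n
  proof (induction n)
    case 0 then show ?case by simp
  next
    case (Suc n) then show ?case using st'[of n] by simp
  qed
  have dle: "(\<Sum>k<n. d' k) \<le> suminf d'" for n
    using ds ds' d0 by (intro sum_le_suminf) (auto simp: d'_def)
  have "(\<Sum>k\<le>n. P' k) \<le> E' 0 + suminf d'" for n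
  proof -
    have "(\<Sum>k\<le>n. P' k) = (\<Sum>k<Suc n. P' k)" by (simp add: lessThan_Suc_atMost)
    then show ?thesis using ind[of "Suc n"] dle[of "Suc n"] E0[rule_format, of "Suc (n + K)"] by (simp add: E'_def)
  qed
  hence "summable P'" using P0 by (intro bounded_imp_summable) (auto simp: P'_def)
  then show "summable P" unfolding P'_def by (subst (asm) summable_iff_shift)
  define W where "W n = E' n - (\<Sum>k<n. d' k)" for n
  have Wd: "W (Suc n) \<le> W n" for n
    using st'[of n] P0[rule_format, of "n + K"] by (simp add: W_def P'_def)
  hence "decseq W" by (simp add: decseq_Suc_iff)
  have Wl: "W n \<ge> - suminf d'" for n using dle[of n] E0[rule_format, of "n + K"] by (simp add: W_def E'_def)
  have Wu: "W n \<le> W 0" for n using \<open>decseq W\<close> by (simp add: decseq_def)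
  have "Bseq W"
  proof (rule BseqI'[of _ "\<bar>W 0\<bar> + suminf d'"])
    fix n
    have "suminf d' \<ge> 0" using dle[of 0] by simp
    then show "norm (W n) \<le> \<bar>W 0\<bar> + suminf d'" using Wl[of n] Wu[of n] using abs_ge_self[of "W 0"] by (simp only: real_norm_def abs_le_iff) linarith
  qed
  moreover have "monoseq W" using \<open>decseq W\<close> by (simp add: monoseq_def decseq_def)
  ultimately have cW: "convergent W" by (rule Bseq_monoseq_convergent)
  have cS: "convergent (\<lambda>n. \<Sum>k<n. d' k)" using ds' by (simp add: summable_iff_convergent)
  have "convergent (\<lambda>n. W n + (\<Sum>k<n. d' k))" using cW cS by (rule convergent_add)
  hence "convergent E'" by (simp add: W_def)
  then show "convergent E" unfolding E'_def by (simp add: convergent_ignore_initial_segment)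
qed

lemma opt_cond:
  fixes f h :: "nat \<Rightarrow> 'a::euclidean_space \<Rightarrow> real" and Dh :: "nat \<Rightarrow> 'a \<Rightarrow> 'a"
  assumes fc: "\<forall>i\<in>{1..m}. convex_on UNIV (f i)"
    and hd: "\<forall>i\<in>{1..m}. \<forall>y. (h i has_derivative (\<lambda>v. Dh i y \<bullet> v)) (at y)"
    and hl: "\<forall>i\<in>{1..m}. (L i)-lipschitz_on UNIV (Dh i)"
    and X: "convex X" and uX: "u \<in> X"
    and uopt: "\<forall>z\<in>X. (\<Sum>i\<in>{1..m}. f i u + h i u) \<le> (\<Sum>i\<in>{1..m}. f i z + h i z)"
  shows "- (\<Sum>i\<in>{1..m}. Dh i u) \<in> subdiff (\<lambda>z. ereal (\<Sum>i\<in>{1..m}. f i z) + indicator_fun X z) u"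
proof -
  have key: "(\<Sum>i\<in>{1..m}. f i y) \<ge> (\<Sum>i\<in>{1..m}. f i u) - (\<Sum>i\<in>{1..m}. Dh i u) \<bullet> (y - u)" if y: "y \<in> X" for y
  proof -
    define B where "B i = f i y - f i u + Dh i u \<bullet> (y - u)" for i
    define C where "C i = L i / 2 * (norm (y - u))^2" for i
    have "0 \<le> (\<Sum>i\<in>{1..m}. B i) + t * (\<Sum>i\<in>{1..m}. C i)" if t: "0 < t" "t < 1" for t
    proof -
      define yt where "yt = (1 - t) *\<^sub>R u + t *\<^sub>R y"
      have ytX: "yt \<in> X" using X uX y t unfolding yt_def by (simp add: convex_def)
      have yu: "yt - u = t *\<^sub>R (y - u)" by (simp add: yt_def algebra_simps)
      have per: "f i yt + h i yt \<le> (f i u + h i u) + t * B i + t^2 * C i" if i: "i \<in> {1..m}" for i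
      proof -
        have 1: "f i yt \<le> (1 - t) * f i u + t * f i y"
          unfolding yt_def using convex_onD[OF fc[rule_format, OF i], of t u y] t by simp
        have 2: "h i yt \<le> h i u + Dh i u \<bullet> (yt - u) + L i / 2 * (norm (yt - u))^2"
          by (rule descent[OF bspec[OF hd i] bspec[OF hl i]])
        have 3: "Dh i u \<bullet> (yt - u) = t * (Dh i u \<bullet> (y - u))" by (simp add: yu)
        have 4: "L i / 2 * (norm (yt - u))^2 = t^2 * C i" using t
          by (simp add: yu C_def power_mult_distrib)
        have 5: "(1 - t) * f i u + t * f i y = f i u + t * (f i y - f i u)" by (simp add: algebra_simps)
        have 6: "t * B i = t * (f i y - f i u) + t * (Dh i u \<bullet> (y - u))" by (simp add: B_def algebra_simps)
        show ?thesis using 1 2 3 4 5 6 by linarith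
      qed
      have "(\<Sum>i\<in>{1..m}. f i u + h i u) \<le> (\<Sum>i\<in>{1..m}. f i yt + h i yt)" using uopt ytX by blast
      also have "\<dots> \<le> (\<Sum>i\<in>{1..m}. (f i u + h i u) + t * B i + t^2 * C i)" using per by (rule sum_mono)
      also have "\<dots> = (\<Sum>i\<in>{1..m}. f i u + h i u) + t * (\<Sum>i\<in>{1..m}. B i) + t^2 * (\<Sum>i\<in>{1..m}. C i)"
        by (simp add: sum.distrib sum_distrib_left)
      finally have "0 \<le> t * ((\<Sum>i\<in>{1..m}. B i) + t * (\<Sum>i\<in>{1..m}. C i))"
        by (simp add: algebra_simps power2_eq_square)
      then show ?thesis using t by (simp add: zero_le_mult_iff)
    qed
    hence "0 \<le> (\<Sum>i\<in>{1..m}. B i)"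
      by (rule small_t) (auto simp: C_def intro!: sum_nonneg mult_nonneg_nonneg lipschitz_on_nonneg[OF hl[rule_format]])
    moreover have "(\<Sum>i\<in>{1..m}. B i) = (\<Sum>i\<in>{1..m}. f i y) - (\<Sum>i\<in>{1..m}. f i u) + (\<Sum>i\<in>{1..m}. Dh i u) \<bullet> (y - u)"
      by (simp add: B_def sum.distrib sum_subtractf inner_sum_left)
    ultimately show ?thesis by linarith
  qed
  show ?thesis unfolding subdiff_def
  proof (intro CollectI conjI allI)
    show "\<bar>ereal (\<Sum>i\<in>{1..m}. f i u) + indicator_fun X u\<bar> \<noteq> \<infinity>" using uX by (simp add: indicator_fun_def)
    fix y
    show "ereal (\<Sum>i\<in>{1..m}. f i u) + indicator_fun X u + ereal (- (\<Sum>i\<in>{1..m}. Dh i u) \<bullet> (y - u))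
          \<le> ereal (\<Sum>i\<in>{1..m}. f i y) + indicator_fun X y"
    proof (cases "y \<in> X")
      case True then show ?thesis using key[OF True] uX by (simp add: indicator_fun_def)
    next
      case False then show ?thesis by (simp add: indicator_fun_def)
    qed
  qed
qed

lemma young:
  fixes c v :: "'a::real_inner"
  assumes e: "\<eta> > 0"
  shows "2 * a * (c \<bullet> v) \<le> a^2 * (norm c)^2 / \<eta> + \<eta> * (norm v)^2"
proof -
  have "0 \<le> (norm (a *\<^sub>R c - \<eta> *\<^sub>R v))^2" by simp
  also have "\<dots> = a^2 * (norm c)^2 - \<eta> * (2 * a * (c \<bullet> v)) + \<eta>^2 * (norm v)^2"
    unfolding power2_norm_eq_inner by (simp add: inner_diff_left inner_diff_right inner_commute algebra_simps power2_eq_square)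
  finally have "\<eta> * (2 * a * (c \<bullet> v)) \<le> \<eta> * (a^2 * (norm c)^2 / \<eta> + \<eta> * (norm v)^2)"
    using e by (simp add: algebra_simps power2_eq_square)
  then show ?thesis using e by simp
qed

lemma dist_bound:
  fixes \<phi> :: "nat \<Rightarrow> 'a::real_normed_vector"
  assumes i: "i \<in> {1..m}"
  shows "norm (x - \<phi> (i + 1)) \<le> norm (x - \<phi> 1) + (\<Sum>j=1..m. norm (\<phi> (j + 1) - \<phi> j))"
proof -
  have tel: "(\<Sum>j=1..i. \<phi> (Suc j) - \<phi> j) = \<phi> (Suc i) - \<phi> 1" by (rule sum_Suc_diff) simp
  have "x - \<phi> (i + 1) = (x - \<phi> 1) - (\<Sum>j=1..i. \<phi> (Suc j) - \<phi> j)" using tel by simp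
  hence "norm (x - \<phi> (i + 1)) \<le> norm (x - \<phi> 1) + norm (\<Sum>j=1..i. \<phi> (Suc j) - \<phi> j)"
    by (metis norm_triangle_ineq4)
  also have "norm (\<Sum>j=1..i. \<phi> (Suc j) - \<phi> j) \<le> (\<Sum>j=1..i. norm (\<phi> (Suc j) - \<phi> j))"
    by (rule norm_sum)
  also have "\<dots> \<le> (\<Sum>j=1..m. norm (\<phi> (Suc j) - \<phi> j))"
    using i by (intro sum_mono2) auto
  finally show ?thesis by simp
qed

lemma cross_bound:
  fixes c \<phi> :: "nat \<Rightarrow> 'a::real_inner"
  assumes e: "\<eta> > 0"
  shows "2 * a * (\<Sum>i=1..m. c i \<bullet> (x - \<phi> (i + 1))) \<le> a^2 * (\<Sum>i=1..m. (norm (c i))^2) / \<eta>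
     + \<eta> * (real m * (real m + 1)) * ((norm (x - \<phi> 1))^2 + (\<Sum>j=1..m. (norm (\<phi> (j + 1) - \<phi> j))^2))"
proof -
  define T where "T = norm (x - \<phi> 1) + (\<Sum>j=1..m. norm (\<phi> (j + 1) - \<phi> j))"
  have T0: "T \<ge> 0" by (simp add: T_def sum_nonneg)
  have each: "2 * a * (c i \<bullet> (x - \<phi> (i + 1))) \<le> a^2 * (norm (c i))^2 / \<eta> + \<eta> * T^2" if i: "i \<in> {1..m}" for i
  proof -
    have "norm (x - \<phi> (i + 1)) \<le> T" unfolding T_def by (rule dist_bound[OF i])
    hence "(norm (x - \<phi> (i + 1)))^2 \<le> T^2" by (simp add: power_mono)
    hence "\<eta> * (norm (x - \<phi> (i + 1)))^2 \<le> \<eta> * T^2" using e by simp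
    then show ?thesis using young[OF e, of a "c i" "x - \<phi> (i + 1)"] by linarith
  qed
  have "2 * a * (\<Sum>i=1..m. c i \<bullet> (x - \<phi> (i + 1))) = (\<Sum>i=1..m. 2 * a * (c i \<bullet> (x - \<phi> (i + 1))))"
    by (simp add: sum_distrib_left)
  also have "\<dots> \<le> (\<Sum>i=1..m. a^2 * (norm (c i))^2 / \<eta> + \<eta> * T^2)" using each by (rule sum_mono)
  also have "\<dots> = a^2 * (\<Sum>i=1..m. (norm (c i))^2) / \<eta> + real m * (\<eta> * T^2)"
    by (simp add: sum.distrib sum_distrib_left sum_divide_distrib)
  also have "T^2 \<le> (real m + 1) * ((norm (x - \<phi> 1))^2 + (\<Sum>j=1..m. (norm (\<phi> (j + 1) - \<phi> j))^2))"
  proof -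
    define y where "y j = (if j = 0 then norm (x - \<phi> 1) else norm (\<phi> (j + 1) - \<phi> j))" for j
    have a1: "(\<Sum>j\<in>{0..m}. y j) = y 0 + (\<Sum>j\<in>{Suc 0..m}. y j)" by (rule sum.atLeast_Suc_atMost) simp
    have a2: "(\<Sum>j\<in>{Suc 0..m}. y j) = (\<Sum>j=1..m. norm (\<phi> (j + 1) - \<phi> j))" by (rule sum.cong) (auto simp: y_def)
    have b1: "(\<Sum>j\<in>{0..m}. (y j)^2) = (y 0)^2 + (\<Sum>j\<in>{Suc 0..m}. (y j)^2)" by (rule sum.atLeast_Suc_atMost) simp
    have b2: "(\<Sum>j\<in>{Suc 0..m}. (y j)^2) = (\<Sum>j=1..m. (norm (\<phi> (j + 1) - \<phi> j))^2)" by (rule sum.cong) (auto simp: y_def)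
    have "(\<Sum>j\<in>{0..m}. y j)^2 \<le> (\<Sum>j\<in>{0..m}. (y j)^2) * card {0..m}" by (rule sum_squared_le_sum_of_squares)
    then show ?thesis using a1 a2 b1 b2 by (simp add: T_def y_def algebra_simps)
  qed
  hence "real m * (\<eta> * T^2) \<le> real m * (\<eta> * ((real m + 1) * ((norm (x - \<phi> 1))^2 + (\<Sum>j=1..m. (norm (\<phi> (j + 1) - \<phi> j))^2))))"
    using e by (intro mult_left_mono) auto
  finally show ?thesis by (simp add: algebra_simps)
qed




theorem lemmaA2:
  fixes m :: nat
    and f h :: "nat \<Rightarrow> 'a::euclidean_space \<Rightarrow> real"
    and Dh :: "nat \<Rightarrow> 'a \<Rightarrow> 'a"
    and L :: "nat \<Rightarrow> real"
    and g :: "'a \<Rightarrow> real" and Dg :: "'a \<Rightarrow> 'a" and Lg :: real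
    and \<alpha> \<beta> :: "nat \<Rightarrow> real"
    and x :: "nat \<Rightarrow> 'a" and \<phi> :: "nat \<Rightarrow> nat \<Rightarrow> 'a"
    and F :: "'a \<Rightarrow> real" and S :: "'a set"
  assumes m_pos: "m \<ge> 1"
    and f_convex: "\<forall>i\<in>{1..m}. convex_on UNIV (f i)"
    and h_convex: "\<forall>i\<in>{1..m}. convex_on UNIV (h i)"
    and h_grad: "\<forall>i\<in>{1..m}. \<forall>y. (h i has_derivative (\<lambda>v. Dh i y \<bullet> v)) (at y)"
    and h_lip: "\<forall>i\<in>{1..m}. L i > 0 \<and> (L i)-lipschitz_on UNIV (Dh i)"
    and F_def: "F = (\<lambda>y. \<Sum>i\<in>{1..m}. f i y + h i y)"
    and g_convex: "convex_on UNIV g"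
    and g_grad: "\<forall>y. (g has_derivative (\<lambda>v. Dg y \<bullet> v)) (at y)"
    and g_lip: "Lg > 0" "Lg-lipschitz_on UNIV Dg"
    and g_min: "(\<exists>y. g y = 0) \<and> (\<forall>y. g y \<ge> 0)"
    and S_def: "S = {y \<in> argmin_set g. \<forall>z\<in>argmin_set g. F y \<le> F z}"
    and S_ne: "S \<noteq> {}"
    and \<alpha>_pos: "\<forall>k\<ge>1. \<alpha> k > 0" and \<beta>_pos: "\<forall>k\<ge>1. \<beta> k > 0"
    and \<phi>_1: "\<forall>k\<ge>1. \<phi> k 1 = x k - (\<alpha> k * \<beta> k) *\<^sub>R Dg (x k)"
    and \<phi>_step: "\<forall>k\<ge>1. \<forall>i\<in>{1..m}.
        \<phi> k (i + 1) = prox (\<alpha> k) (f i) (\<phi> k i - \<alpha> k *\<^sub>R Dh i (\<phi> k i))"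
    and x_step: "\<forall>k\<ge>1. x (k + 1) = \<phi> k (m + 1)"
    and H1: "\<forall>y. subdiff (\<lambda>z. ereal (\<Sum>i\<in>{1..m}. f i z) + indicator_fun (argmin_set g) z) y
        = {(\<Sum>i\<in>{1..m}. w i) + p | w p.
            (\<forall>i\<in>{1..m}. w i \<in> subdiff (\<lambda>z. ereal (f i z)) y) \<and> p \<in> normal_cone (argmin_set g) y}"
    and H2: "\<not> summable (\<lambda>k. \<alpha> (k + 1))" "summable (\<lambda>k. (\<alpha> (k + 1))^2)"
    and H3: "0 < liminf (\<lambda>k. ereal (\<alpha> k * \<beta> k))"
            "limsup (\<lambda>k. ereal (\<alpha> k * \<beta> k)) < ereal (2 / Lg)"
    and H4: "\<forall>p \<in> (\<Union>y\<in>argmin_set g. normal_cone (argmin_set g) y).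
        (\<Sum>k. ereal (\<alpha> (k + 1) * \<beta> (k + 1)) *
            (fconj g ((1 / \<beta> (k + 1)) *\<^sub>R p) - support_fun (argmin_set g) ((1 / \<beta> (k + 1)) *\<^sub>R p))) < \<infinity>"
  shows "quasi_fejer (\<lambda>k. x (k + 1)) S
    \<and> (\<forall>u\<in>S. convergent (\<lambda>k. norm (x k - u)))
    \<and> summable (\<lambda>k. \<alpha> (k + 1) * \<beta> (k + 1) * g (x (k + 1)))
    \<and> summable (\<lambda>k. \<alpha> (k + 1) * \<beta> (k + 1) * (norm (Dg (x (k + 1))))^2)
    \<and> summable (\<lambda>k. \<Sum>i\<in>{1..m}. (norm (\<phi> (k + 1) (i + 1) - \<phi> (k + 1) i))^2)
    \<and> ((\<lambda>k. g (x k)) \<longlonglongrightarrow> 0)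
    \<and> ((\<lambda>k. norm (Dg (x k))) \<longlonglongrightarrow> 0)
    \<and> ((\<lambda>k. \<Sum>i\<in>{1..m}. (norm (\<phi> k (i + 1) - \<phi> k i))^2) \<longlonglongrightarrow> 0)
    \<and> ((\<lambda>k. norm (x k - \<phi> k 1)) \<longlonglongrightarrow> 0)
    \<and> (\<forall>z r. strict_mono r \<and> (x \<circ> r) \<longlonglongrightarrow> z \<longrightarrow> z \<in> argmin_set g)"
proof -
  have gnn: "\<forall>y. g y \<ge> 0" using g_min by auto
  obtain y0 where y0: "g y0 = 0" using g_min by auto
  have argmin_eq: "argmin_set g = {y. g y = 0}"
  proof
    show "argmin_set g \<subseteq> {y. g y = 0}"
      using y0 gnn by (auto simp: argmin_set_def) (metis antisym)
    show "{y. g y = 0} \<subseteq> argmin_set g" using gnn by (auto simp: argmin_set_def)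
  qed
  have cvxX: "convex (argmin_set g)"
    unfolding convex_def argmin_eq
  proof (intro ballI allI impI)
    fix a b and s t :: real
    assume ab: "a \<in> {y. g y = 0}" "b \<in> {y. g y = 0}" and st: "0 \<le> s" "0 \<le> t" "s + t = 1"
    have "g ((1 - t) *\<^sub>R a + t *\<^sub>R b) \<le> (1 - t) * g a + t * g b"
      using convex_onD[OF g_convex, of t a b] st by simp
    moreover have "1 - t = s" using st by simp
    ultimately have "g (s *\<^sub>R a + t *\<^sub>R b) \<le> 0" using ab by simp
    then show "s *\<^sub>R a + t *\<^sub>R b \<in> {y. g y = 0}" using gnn by (simp add: antisym)
  qed
  have hl': "\<forall>i\<in>{1..m}. (L i)-lipschitz_on UNIV (Dh i)" using h_lip by auto
  have bpos: "\<forall>k\<ge>1. \<alpha> k * \<beta> k > 0" using \<alpha>_pos \<beta>_pos by auto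
  obtain z0 where z0: "0 < ereal z0" "ereal z0 < liminf (\<lambda>k. ereal (\<alpha> k * \<beta> k))"
    using ereal_dense2[OF H3(1)] by blast
  have ev1: "eventually (\<lambda>k. ereal z0 < ereal (\<alpha> k * \<beta> k)) sequentially"
    by (rule less_LiminfD[OF z0(2)])
  obtain B where B: "limsup (\<lambda>k. ereal (\<alpha> k * \<beta> k)) < ereal B" "ereal B < ereal (2 / Lg)"
    using ereal_dense2[OF H3(2)] by blast
  have ev2: "eventually (\<lambda>k. ereal (\<alpha> k * \<beta> k) < ereal B) sequentially"
    by (rule Limsup_lessD[OF B(1)])
  have BL: "B < 2 / Lg" using B(2) by simp
  define \<beta>0 where "\<beta>0 = z0"
  have \<beta>0: "\<beta>0 > 0" using z0(1) by (simp add: \<beta>0_def)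
  have a2: "(\<lambda>k. (\<alpha> (k + 1))^2) \<longlonglongrightarrow> 0" by (rule summable_LIMSEQ_zero[OF H2(2)])
  have "(\<lambda>k. sqrt ((\<alpha> (k + 1))^2)) \<longlonglongrightarrow> sqrt 0" by (rule tendsto_real_sqrt[OF a2])
  hence "(\<lambda>k. \<bar>\<alpha> (k + 1)\<bar>) \<longlonglongrightarrow> 0" by simp
  hence a0: "(\<lambda>k. \<alpha> (k + 1)) \<longlonglongrightarrow> 0" by (simp add: tendsto_rabs_zero_iff)
  define Ls where "Ls = (\<Sum>i\<in>{1..m}. L i)"
  have Ls: "Ls > 0" unfolding Ls_def using h_lip m_pos by (intro sum_pos) auto
  have LiLs: "\<forall>i\<in>{1..m}. L i \<le> Ls" unfolding Ls_def using h_lip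
    by (intro ballI member_le_sum) (auto dest: bspec intro: less_imp_le)
  have ev3: "eventually (\<lambda>k. \<alpha> (k + 1) < 1 / (4 * Ls)) sequentially"
    using order_tendstoD(2)[OF a0, of "1 / (4 * Ls)"] Ls by simp
  obtain N1 where N1: "\<forall>k\<ge>N1. \<beta>0 < \<alpha> k * \<beta> k" using ev1 by (auto simp: eventually_sequentially \<beta>0_def)
  obtain N2 where N2: "\<forall>k\<ge>N2. \<alpha> k * \<beta> k < B" using ev2 by (auto simp: eventually_sequentially)
  obtain N3 where N3: "\<forall>k\<ge>N3. \<alpha> (k + 1) < 1 / (4 * Ls)" using ev3 by (auto simp: eventually_sequentially)
  define K where "K = max 1 (max N1 (max N2 (N3 + 1)))"
  have K1: "K \<ge> 1" by (simp add: K_def)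
  have Kb0: "\<forall>k\<ge>K. \<beta>0 < \<alpha> k * \<beta> k" using N1 by (simp add: K_def)
  have KB: "\<forall>k\<ge>K. \<alpha> k * \<beta> k < B" using N2 by (simp add: K_def)
  have KL: "\<forall>k\<ge>K. \<alpha> k * Ls \<le> 1 / 4"
  proof (intro allI impI)
    fix k assume k: "K \<le> k"
    define j where "j = k - 1"
    have j: "k = j + 1" "j \<ge> N3" using k by (auto simp: K_def j_def)
    have "\<alpha> k < 1 / (4 * Ls)" using N3 j by simp
    then show "\<alpha> k * Ls \<le> 1 / 4" using Ls by (simp add: field_simps)
  qed
  have Bpos: "B > 0" using bpos[rule_format, OF K1] KB[rule_format, of K] by simp
  define \<theta> where "\<theta> = (2 - Lg * B) / 2"
  have \<theta>: "0 < \<theta>" "\<theta> < 1" using BL Bpos g_lip(1) by (simp_all add: \<theta>_def field_simps)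
  have \<theta>B: "(2 - \<theta>) / Lg - \<theta> / Lg = B" using g_lip(1) by (simp add: \<theta>_def field_simps)
  define M1 where "M1 = real m * (real m + 1)"
  have M1: "M1 > 0" using m_pos by (simp add: M1_def)
  define \<eta> where "\<eta> = min (1 / (4 * M1)) (\<theta> / (2 * Lg * B * M1))"
  have \<eta>: "\<eta> > 0" using M1 \<theta> Bpos g_lip(1) by (simp add: \<eta>_def)
  have \<eta>1: "M1 * \<eta> \<le> 1 / 4"
  proof -
    have "\<eta> \<le> 1 / (4 * M1)" by (simp add: \<eta>_def)
    then show ?thesis using M1 by (simp add: field_simps)
  qed
  have \<eta>2: "M1 * \<eta> * B \<le> \<theta> / (2 * Lg)"
  proof -
    have "\<eta> \<le> \<theta> / (2 * Lg * B * M1)" by (simp add: \<eta>_def)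
    then show ?thesis using M1 Bpos g_lip(1) by (simp add: field_simps)
  qed
  define P where "P k = \<alpha> k * \<beta> k * \<theta> * g (x k) + \<alpha> k * \<beta> k * \<theta> / (2 * Lg) * (norm (Dg (x k)))^2
      + 1 / 2 * (\<Sum>i=1..m. (norm (\<phi> k (i + 1) - \<phi> k i))^2)" for k
  have Pnn: "\<forall>k\<ge>K. P k \<ge> 0"
  proof (intro allI impI)
    fix k assume "K \<le> k"
    hence "\<alpha> k > 0" "\<beta> k > 0" using \<alpha>_pos \<beta>_pos K1 by auto
    then show "P k \<ge> 0" unfolding P_def using \<theta> gnn g_lip(1)
      by (intro add_nonneg_nonneg mult_nonneg_nonneg sum_nonneg) auto
  qed
  have main: "\<exists>\<delta>. (\<forall>k. \<delta> k \<ge> 0) \<and> summable \<delta> \<and>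
      (\<forall>k\<ge>K. (norm (x (Suc k) - u))^2 \<le> (norm (x k - u))^2 - P k + \<delta> k)" if uS: "u \<in> S" for u
  proof -
    have uX: "u \<in> argmin_set g" and uopt: "\<forall>z\<in>argmin_set g. F u \<le> F z" using uS S_def by auto
    have gu: "g u = 0" using uX argmin_eq by auto
    have "g u - 0 \<ge> (norm (Dg u))^2 / (2 * Lg)"
      by (rule grad_bound[OF g_grad g_lip(2) g_lip(1)]) (use gnn in auto)
    hence Dgu: "Dg u = 0" using gu g_lip(1) by (simp add: divide_le_0_iff)
    have "- (\<Sum>i\<in>{1..m}. Dh i u) \<in> subdiff (\<lambda>z. ereal (\<Sum>i\<in>{1..m}. f i z) + indicator_fun (argmin_set g) z) u"
      by (rule opt_cond[OF f_convex h_grad hl' cvxX uX]) (use uopt F_def in simp)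
    then obtain w p where wp: "- (\<Sum>i\<in>{1..m}. Dh i u) = (\<Sum>i\<in>{1..m}. w i) + p"
        "\<forall>i\<in>{1..m}. w i \<in> subdiff (\<lambda>z. ereal (f i z)) u" "p \<in> normal_cone (argmin_set g) u"
      using H1 by auto
    have fw: "\<forall>i\<in>{1..m}. \<forall>y. f i y \<ge> f i u + w i \<bullet> (y - u)"
    proof (intro ballI allI)
      fix i y assume "i \<in> {1..m}"
      hence "ereal (f i u) + ereal (w i \<bullet> (y - u)) \<le> ereal (f i y)" using wp(2) by (auto simp: subdiff_def)
      then show "f i y \<ge> f i u + w i \<bullet> (y - u)" by simp
    qed
    have pn: "\<forall>y\<in>argmin_set g. p \<bullet> (y - u) \<le> 0" using wp(3) uX by (simp add: normal_cone_def)
    define q where "q = (2 / \<theta>) *\<^sub>R p"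
    have qN: "q \<in> normal_cone (argmin_set g) u"
    proof -
      have "q \<bullet> (y - u) \<le> 0" if "y \<in> argmin_set g" for y
      proof -
        have "2 * (p \<bullet> (y - u)) \<le> 0" using pn that by auto
        hence "(2 * (p \<bullet> (y - u))) / \<theta> \<le> 0" using \<theta> by (simp add: divide_nonpos_pos)
        hence "(2 / \<theta>) * (p \<bullet> (y - u)) \<le> 0" by simp
        then show ?thesis by (simp add: q_def)
      qed
      then show ?thesis using uX by (simp add: normal_cone_def)
    qed
    have qU: "q \<in> (\<Union>y\<in>argmin_set g. normal_cone (argmin_set g) y)" using uX qN by blast
    have g0: "\<forall>y\<in>argmin_set g. g y = 0" using argmin_eq by auto
    obtain G where G: "\<forall>k. G k \<ge> 0" "summable (\<lambda>k. \<alpha> (k + 1) * \<beta> (k + 1) * G (k + 1))"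
        "\<forall>k\<ge>1. \<forall>y. ((1 / \<beta> k) *\<^sub>R q) \<bullet> (y - u) - g y \<le> G k"
      using H4_use[OF uX qN g0, of "\<lambda>k. \<alpha> k * \<beta> k" \<beta>] bpos \<beta>_pos H4[rule_format, OF qU] by auto
    define c where "c i = w i + Dh i u" for i
    have csum: "(\<Sum>i\<in>{1..m}. c i) = - p"
    proof -
      have "(\<Sum>i\<in>{1..m}. c i) = (\<Sum>i\<in>{1..m}. w i) + (\<Sum>i\<in>{1..m}. Dh i u)" by (simp add: c_def sum.distrib)
      also have "\<dots> = - p" using wp(1) by (simp add: algebra_simps) (metis add.commute add_diff_cancel_right' diff_minus_eq_add minus_add_distrib neg_eq_iff_add_eq_0)
      finally show ?thesis .
    qed
    define C where "C = (\<Sum>i=1..m. (norm (c i))^2)"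
    have C0: "C \<ge> 0" by (simp add: C_def sum_nonneg)
    define \<delta> where "\<delta> k = (if k = 0 then 0 else \<alpha> k * \<beta> k * \<theta> * G k + (\<alpha> k)^2 * C / \<eta>)" for k
    have \<delta>0: "\<forall>k. \<delta> k \<ge> 0"
    proof
      fix k
      show "\<delta> k \<ge> 0"
      proof (cases "k = 0")
        case False
        hence "\<alpha> k > 0" "\<beta> k > 0" using \<alpha>_pos \<beta>_pos by auto
        then show ?thesis using False G(1) \<theta> C0 \<eta> by (simp add: \<delta>_def)
      qed (simp add: \<delta>_def)
    qed
    have "summable (\<lambda>k. \<theta> * (\<alpha> (k + 1) * \<beta> (k + 1) * G (k + 1)) + C / \<eta> * (\<alpha> (k + 1))^2)"
      by (intro summable_add summable_mult G(2) H2(2))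
    hence "summable (\<lambda>k. \<delta> (k + 1))" by (simp add: \<delta>_def algebra_simps)
    hence \<delta>s: "summable \<delta>" by (subst (asm) summable_iff_shift)
    have gineq: "Dg y \<bullet> (y - u) \<ge> \<theta> * g y + (2 - \<theta>) / (2 * Lg) * (norm (Dg y))^2" for y
    proof -
      have b: "g u \<ge> g y + Dg y \<bullet> (u - y) + (norm (Dg u - Dg y))^2 / (2 * Lg)"
        by (rule baillon[OF g_convex g_grad g_lip(2) g_lip(1)])
      have "Dg y \<bullet> (u - y) = - (Dg y \<bullet> (y - u))" by (simp add: inner_diff_right)
      hence ip: "Dg y \<bullet> (y - u) \<ge> g y + (norm (Dg y))^2 / (2 * Lg)" using b gu Dgu by simp
      have gb: "g y - 0 \<ge> (norm (Dg y))^2 / (2 * Lg)"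
        by (rule grad_bound[OF g_grad g_lip(2) g_lip(1)]) (use gnn in auto)
      have "(1 - \<theta>) * g y \<ge> (1 - \<theta>) * ((norm (Dg y))^2 / (2 * Lg))"
        using gb \<theta> by (intro mult_left_mono) auto
      moreover have "(2 - \<theta>) / (2 * Lg) * (norm (Dg y))^2 = (1 - \<theta>) * ((norm (Dg y))^2 / (2 * Lg)) + (norm (Dg y))^2 / (2 * Lg)"
        using g_lip(1) by (simp add: field_simps)
      moreover have "g y = \<theta> * g y + (1 - \<theta>) * g y" by (simp add: algebra_simps)
      ultimately show ?thesis using ip by linarith
    qed
    have step: "(norm (x (Suc k) - u))^2 \<le> (norm (x k - u))^2 - P k + \<delta> k" if k: "k \<ge> K" for k
    proof -
      have k1: "k \<ge> 1" using k K1 by simp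
      define a where "a = \<alpha> k"
      define b where "b = \<alpha> k * \<beta> k"
      define xx where "xx = x k"
      have a: "a > 0" using \<alpha>_pos k1 by (simp add: a_def)
      have bet: "\<beta> k > 0" using \<beta>_pos k1 by simp
      have b: "b > 0" "b < B" "\<beta>0 < b" using bpos KB Kb0 k k1 by (auto simp: b_def)
      have aL: "\<forall>i\<in>{1..m}. a * L i \<le> 1 / 4"
      proof
        fix i assume i: "i \<in> {1..m}"
        have "a * L i \<le> a * Ls" using LiLs i a by (simp add: mult_left_mono)
        moreover have "a * Ls \<le> 1 / 4" using KL k by (simp add: a_def)
        ultimately show "a * L i \<le> 1 / 4" by linarith
      qed
      have phk: "\<forall>i\<in>{1..m}. \<phi> k (i + 1) = prox a (f i) (\<phi> k i - a *\<^sub>R Dh i (\<phi> k i))"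
        using \<phi>_step k1 by (simp add: a_def)
      have ph1: "\<phi> k 1 = xx - b *\<^sub>R Dg xx" using \<phi>_1 k1 by (simp add: xx_def b_def)
      have xs: "x (Suc k) = \<phi> k (m + 1)" using x_step k1 by simp
      define SD where "SD = (\<Sum>i=1..m. (norm (\<phi> k (i + 1) - \<phi> k i))^2)"
      define S1 where "S1 = (\<Sum>i=1..m. (1 - a * L i) * (norm (\<phi> k (i + 1) - \<phi> k i))^2)"
      define CU where "CU = (\<Sum>i=1..m. c i \<bullet> (u - \<phi> k (i + 1)))"
      define CR where "CR = (\<Sum>i=1..m. c i \<bullet> (xx - \<phi> k (i + 1)))"
      define N where "N = (norm (Dg xx))^2"
      define IP where "IP = Dg xx \<bullet> (xx - u)"
      define PP where "PP = p \<bullet> (xx - u)"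
      define E where "E = (norm (xx - u))^2"
      define E' where "E' = (norm (x (Suc k) - u))^2"
      define \<Phi>1 where "\<Phi>1 = (norm (\<phi> k 1 - u))^2"
      have F1: "E' \<le> \<Phi>1 - S1 + 2 * a * CU"
        unfolding E'_def \<Phi>1_def S1_def CU_def c_def xs
        by (rule inc_chain[OF f_convex h_convex h_grad hl' a fw phk])
      have F2: "S1 \<ge> 3 / 4 * SD"
      proof -
        have "(\<Sum>i=1..m. 3 / 4 * (norm (\<phi> k (i + 1) - \<phi> k i))^2) \<le> S1"
          unfolding S1_def using aL by (intro sum_mono mult_right_mono) auto
        then show ?thesis by (simp add: SD_def sum_distrib_left)
      qed
      have F3: "\<Phi>1 = E - 2 * b * IP + b^2 * N"
      proof -
        have e: "\<phi> k 1 - u = (xx - u) - b *\<^sub>R Dg xx" unfolding ph1 by simp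
        show ?thesis unfolding \<Phi>1_def E_def IP_def N_def e power2_norm_eq_inner
          by (simp add: inner_diff_left inner_diff_right inner_commute algebra_simps power2_eq_square)
      qed
      define X1 where "X1 = b * \<theta> * g xx"
      define X2 where "X2 = b * ((2 - \<theta>) / Lg) * N"
      define X3 where "X3 = b^2 * N"
      define X4 where "X4 = b * (\<theta> / Lg) * N"
      define X5 where "X5 = b * \<theta> / (2 * Lg) * N"
      have F4: "2 * b * IP \<ge> 2 * X1 + X2"
      proof -
        have "2 * b * IP \<ge> 2 * b * (\<theta> * g xx + (2 - \<theta>) / (2 * Lg) * N)"
          using gineq[of xx] b by (simp add: IP_def N_def)
        also have "2 * b * (\<theta> * g xx + (2 - \<theta>) / (2 * Lg) * N) = 2 * X1 + X2"
          unfolding X1_def X2_def using g_lip(1) by (simp add: field_simps)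
        finally show ?thesis .
      qed
      have N0: "N \<ge> 0" by (simp add: N_def)
      have F5: "X2 - X3 \<ge> X4"
      proof -
        have "X2 - X3 - X4 = b * (((2 - \<theta>) / Lg - \<theta> / Lg) - b) * N"
          by (simp add: X2_def X3_def X4_def algebra_simps power2_eq_square)
        also have "\<dots> = b * (B - b) * N" using \<theta>B by simp
        also have "\<dots> \<ge> 0" using b N0 by simp
        finally show ?thesis by simp
      qed
      have X45: "X4 = 2 * X5" by (simp add: X4_def X5_def)
      have F6: "CU = PP + CR"
      proof -
        have "CU = (\<Sum>i=1..m. c i \<bullet> (u - xx)) + CR"
          by (simp add: CU_def CR_def sum.distrib[symmetric] inner_diff_right)
        also have "(\<Sum>i=1..m. c i \<bullet> (u - xx)) = (\<Sum>i=1..m. c i) \<bullet> (u - xx)" by (simp add: inner_sum_left)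
        also have "\<dots> = PP" using csum by (simp add: PP_def inner_diff_right)
        finally show ?thesis .
      qed
      have F7: "2 * a * CR \<le> a^2 * C / \<eta> + \<eta> * M1 * (X3 + SD)"
      proof -
        have "(norm (xx - \<phi> k 1))^2 = X3" using ph1 by (simp add: X3_def N_def power_mult_distrib)
        then show ?thesis using cross_bound[OF \<eta>, where a=a and c=c and m=m and x=xx and \<phi>="\<phi> k"]
          by (simp add: CR_def C_def SD_def M1_def)
      qed
      have F7': "\<eta> * M1 * (X3 + SD) \<le> X5 + SD / 4"
      proof -
        have SD0: "SD \<ge> 0" by (simp add: SD_def sum_nonneg)
        have "(M1 * \<eta>) * SD \<le> (1 / 4) * SD" using \<eta>1 SD0 by (rule mult_right_mono)
        hence "\<eta> * M1 * SD \<le> SD / 4" by (simp add: algebra_simps)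
        moreover have "\<eta> * M1 * X3 \<le> X5"
        proof -
          have "M1 * \<eta> * b \<le> M1 * \<eta> * B" using b M1 \<eta> by (intro mult_left_mono) auto
          hence "M1 * \<eta> * b \<le> \<theta> / (2 * Lg)" using \<eta>2 by linarith
          hence "(M1 * \<eta> * b) * (b * N) \<le> \<theta> / (2 * Lg) * (b * N)" using b N0 by (intro mult_right_mono) auto
          then show ?thesis by (simp add: X3_def X5_def power2_eq_square algebra_simps)
        qed
        ultimately show ?thesis by (simp add: distrib_left)
      qed
      have F8: "2 * a * PP - X1 \<le> b * \<theta> * G k"
      proof -
        have "((1 / \<beta> k) *\<^sub>R q) \<bullet> (xx - u) - g xx \<le> G k" using G(3) k1 by blast
        hence "(2 / (\<theta> * \<beta> k)) * PP - g xx \<le> G k" by (simp add: q_def PP_def mult.commute)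
        hence "(b * \<theta>) * ((2 / (\<theta> * \<beta> k)) * PP - g xx) \<le> (b * \<theta>) * G k"
          using b \<theta> by (intro mult_left_mono) auto
        moreover have "(b * \<theta>) * ((2 / (\<theta> * \<beta> k)) * PP - g xx) = 2 * a * PP - X1"
          using \<theta> bet by (simp add: b_def a_def X1_def field_simps)
        ultimately show ?thesis by (simp add: algebra_simps)
      qed
      have "E' \<le> E - (X1 + X5 + 1 / 2 * SD) + (b * \<theta> * G k + a^2 * C / \<eta>)"
      proof -
        have F6': "2 * a * CU = 2 * a * PP + 2 * a * CR" using F6 by (simp add: algebra_simps)
        have F7'': "\<eta> * M1 * (X3 + SD) = \<eta> * M1 * X3 + \<eta> * M1 * SD" by (simp add: algebra_simps)
        show ?thesis using F1 F2 F3 F4 F5 X45 F6' F7 F7' F8 X3_def by linarith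
      qed
      moreover have "P k = X1 + X5 + 1 / 2 * SD"
        by (simp add: P_def X1_def X5_def SD_def b_def xx_def N_def)
      moreover have "\<delta> k = b * \<theta> * G k + a^2 * C / \<eta>" using k1 by (simp add: \<delta>_def a_def b_def)
      ultimately show ?thesis by (simp add: E'_def E_def xx_def)
    qed
    show ?thesis using \<delta>0 \<delta>s step by blast
  qed

  obtain u0 where u0: "u0 \<in> S" using S_ne by blast
  have conv: "convergent (\<lambda>k. (norm (x k - u))^2)" if uS': "u \<in> S" for u
  proof -
    obtain \<delta> where d: "\<forall>k. \<delta> k \<ge> 0" "summable \<delta>"
      "\<forall>k\<ge>K. (norm (x (Suc k) - u))^2 \<le> (norm (x k - u))^2 - P k + \<delta> k"
      using main[OF uS'] by blast
    show ?thesis by (rule seq_lemma(1)[where P=P and K=K and \<delta>=\<delta>]) (use d Pnn in auto)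
  qed
  have Ps: "summable P"
  proof -
    obtain \<delta> where d: "\<forall>k. \<delta> k \<ge> 0" "summable \<delta>"
      "\<forall>k\<ge>K. (norm (x (Suc k) - u0))^2 \<le> (norm (x k - u0))^2 - P k + \<delta> k"
      using main[OF u0] by blast
    show ?thesis by (rule seq_lemma(2)[where E="\<lambda>k. (norm (x k - u0))^2" and P=P and K=K and \<delta>=\<delta>]) (use d Pnn in auto)
  qed
  have P0: "P \<longlonglongrightarrow> 0" by (rule summable_LIMSEQ_zero[OF Ps])
  have Ps1: "summable (\<lambda>k. P (k + 1))" using Ps by (subst summable_iff_shift)
  have comp: "\<forall>k\<ge>K. \<alpha> k * \<beta> k * \<theta> * g (x k) \<le> P k \<and> \<alpha> k * \<beta> k * \<theta> / (2 * Lg) * (norm (Dg (x k)))^2 \<le> P k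
      \<and> 1 / 2 * (\<Sum>i=1..m. (norm (\<phi> k (i + 1) - \<phi> k i))^2) \<le> P k
      \<and> 0 \<le> \<alpha> k * \<beta> k * \<theta> * g (x k) \<and> 0 \<le> \<alpha> k * \<beta> k * \<theta> / (2 * Lg) * (norm (Dg (x k)))^2
      \<and> 0 \<le> (\<Sum>i=1..m. (norm (\<phi> k (i + 1) - \<phi> k i))^2)"
  proof (intro allI impI)
    fix k assume k: "K \<le> k"
    hence "\<alpha> k > 0" "\<beta> k > 0" using \<alpha>_pos \<beta>_pos K1 by auto
    hence a: "0 \<le> \<alpha> k * \<beta> k * \<theta> * g (x k)" "0 \<le> \<alpha> k * \<beta> k * \<theta> / (2 * Lg) * (norm (Dg (x k)))^2"
      "0 \<le> (\<Sum>i=1..m. (norm (\<phi> k (i + 1) - \<phi> k i))^2)"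
      using \<theta> gnn g_lip(1) by (auto intro!: mult_nonneg_nonneg sum_nonneg)
    then show "\<alpha> k * \<beta> k * \<theta> * g (x k) \<le> P k \<and> \<alpha> k * \<beta> k * \<theta> / (2 * Lg) * (norm (Dg (x k)))^2 \<le> P k
      \<and> 1 / 2 * (\<Sum>i=1..m. (norm (\<phi> k (i + 1) - \<phi> k i))^2) \<le> P k
      \<and> 0 \<le> \<alpha> k * \<beta> k * \<theta> * g (x k) \<and> 0 \<le> \<alpha> k * \<beta> k * \<theta> / (2 * Lg) * (norm (Dg (x k)))^2
      \<and> 0 \<le> (\<Sum>i=1..m. (norm (\<phi> k (i + 1) - \<phi> k i))^2)"
      unfolding P_def by (intro conjI; linarith)
  qed
  have qf: "quasi_fejer (\<lambda>k. x (k + 1)) S"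
    unfolding quasi_fejer_def
  proof
    fix c assume c: "c \<in> S"
    obtain \<delta> where d: "\<forall>k. \<delta> k \<ge> 0" "summable \<delta>"
      "\<forall>k\<ge>K. (norm (x (Suc k) - c))^2 \<le> (norm (x k - c))^2 - P k + \<delta> k"
      using main[OF c] by blast
    have "\<forall>k\<ge>K. (norm (x (Suc k + 1) - c))^2 \<le> (norm (x (k + 1) - c))^2 + \<delta> (k + 1)"
    proof (intro allI impI)
      fix k assume "K \<le> k"
      hence "K \<le> k + 1" by simp
      hence "(norm (x (Suc (k + 1)) - c))^2 \<le> (norm (x (k + 1) - c))^2 - P (k + 1) + \<delta> (k + 1)"
        "P (k + 1) \<ge> 0" using d(3) Pnn by blast+
      then show "(norm (x (Suc k + 1) - c))^2 \<le> (norm (x (k + 1) - c))^2 + \<delta> (k + 1)"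
        by simp
    qed
    moreover have "summable (\<lambda>k. \<delta> (k + 1))" using d(2) by (subst summable_iff_shift)
    ultimately show "\<exists>\<delta>::nat \<Rightarrow> real. (\<forall>k. \<delta> k \<ge> 0) \<and> summable \<delta> \<and>
      (\<exists>k0. \<forall>k\<ge>k0. norm ((\<lambda>k. x (k + 1)) (Suc k) - c)^2 \<le> norm ((\<lambda>k. x (k + 1)) k - c)^2 + \<delta> k)"
      using d(1) by (intro exI[of _ "\<lambda>k. \<delta> (k + 1)"]) auto
  qed
  have cn: "\<forall>u\<in>S. convergent (\<lambda>k. norm (x k - u))"
  proof
    fix u assume "u \<in> S"
    then obtain l where l: "(\<lambda>k. (norm (x k - u))^2) \<longlonglongrightarrow> l" using conv convergent_def by blast
    have "(\<lambda>k. sqrt ((norm (x k - u))^2)) \<longlonglongrightarrow> sqrt l" by (rule tendsto_real_sqrt[OF l])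
    then show "convergent (\<lambda>k. norm (x k - u))" by (auto simp: convergent_def)
  qed
  have s1: "summable (\<lambda>k. \<alpha> (k + 1) * \<beta> (k + 1) * g (x (k + 1)))"
  proof (rule summable_comparison_test)
    show "summable (\<lambda>k. P (k + 1) / \<theta>)" using Ps1 by (rule summable_divide)
    show "\<exists>N. \<forall>n\<ge>N. norm (\<alpha> (n + 1) * \<beta> (n + 1) * g (x (n + 1))) \<le> P (n + 1) / \<theta>"
    proof (intro exI allI impI)
      fix n assume "K \<le> n"
      hence "K \<le> n + 1" by simp
      hence h: "\<alpha> (n + 1) * \<beta> (n + 1) * \<theta> * g (x (n + 1)) \<le> P (n + 1)" "0 \<le> \<alpha> (n + 1) * \<beta> (n + 1) * \<theta> * g (x (n + 1))"
        using comp by blast+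
      have "0 \<le> \<alpha> (n + 1) * \<beta> (n + 1) * g (x (n + 1))"
        by (intro mult_nonneg_nonneg) (use \<alpha>_pos \<beta>_pos gnn in \<open>auto intro: less_imp_le\<close>)
      then show "norm (\<alpha> (n + 1) * \<beta> (n + 1) * g (x (n + 1))) \<le> P (n + 1) / \<theta>"
        using h(1) \<theta> by (simp add: field_simps)
    qed
  qed
  have s2: "summable (\<lambda>k. \<alpha> (k + 1) * \<beta> (k + 1) * (norm (Dg (x (k + 1))))^2)"
  proof (rule summable_comparison_test)
    show "summable (\<lambda>k. P (k + 1) * (2 * Lg / \<theta>))" using Ps1 by (rule summable_mult2)
    show "\<exists>N. \<forall>n\<ge>N. norm (\<alpha> (n + 1) * \<beta> (n + 1) * (norm (Dg (x (n + 1))))^2) \<le> P (n + 1) * (2 * Lg / \<theta>)"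
    proof (intro exI allI impI)
      fix n assume "K \<le> n"
      hence "K \<le> n + 1" by simp
      hence h: "\<alpha> (n + 1) * \<beta> (n + 1) * \<theta> / (2 * Lg) * (norm (Dg (x (n + 1))))^2 \<le> P (n + 1)"
        "0 \<le> \<alpha> (n + 1) * \<beta> (n + 1) * \<theta> / (2 * Lg) * (norm (Dg (x (n + 1))))^2"
        using comp by blast+
      have "0 \<le> \<alpha> (n + 1) * \<beta> (n + 1) * (norm (Dg (x (n + 1))))^2"
        by (intro mult_nonneg_nonneg) (use \<alpha>_pos \<beta>_pos in \<open>auto intro: less_imp_le\<close>)
      then show "norm (\<alpha> (n + 1) * \<beta> (n + 1) * (norm (Dg (x (n + 1))))^2) \<le> P (n + 1) * (2 * Lg / \<theta>)"
        using h(1) \<theta> g_lip(1) by (simp add: field_simps)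
    qed
  qed
  have s3: "summable (\<lambda>k. \<Sum>i\<in>{1..m}. (norm (\<phi> (k + 1) (i + 1) - \<phi> (k + 1) i))^2)"
  proof (rule summable_comparison_test)
    show "summable (\<lambda>k. 2 * P (k + 1))" using Ps1 by (rule summable_mult)
    show "\<exists>N. \<forall>n\<ge>N. norm (\<Sum>i\<in>{1..m}. (norm (\<phi> (n + 1) (i + 1) - \<phi> (n + 1) i))^2) \<le> 2 * P (n + 1)"
    proof (intro exI allI impI)
      fix n assume "K \<le> n"
      hence "K \<le> n + 1" by simp
      hence "1 / 2 * (\<Sum>i=1..m. (norm (\<phi> (n + 1) (i + 1) - \<phi> (n + 1) i))^2) \<le> P (n + 1)"
        "0 \<le> (\<Sum>i=1..m. (norm (\<phi> (n + 1) (i + 1) - \<phi> (n + 1) i))^2)" using comp by blast+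
      then show "norm (\<Sum>i\<in>{1..m}. (norm (\<phi> (n + 1) (i + 1) - \<phi> (n + 1) i))^2) \<le> 2 * P (n + 1)"
        by simp
    qed
  qed
  have l1: "(\<lambda>k. g (x k)) \<longlonglongrightarrow> 0"
  proof (rule Lim_null_comparison)
    show "eventually (\<lambda>k. norm (g (x k)) \<le> P k / (\<theta> * \<beta>0)) sequentially"
      unfolding eventually_sequentially
    proof (intro exI allI impI)
      fix k assume k: "K \<le> k"
      hence h: "\<alpha> k * \<beta> k * \<theta> * g (x k) \<le> P k" using comp by blast
      have "\<theta> * \<beta>0 * g (x k) \<le> \<theta> * (\<alpha> k * \<beta> k) * g (x k)"
        using Kb0 k \<theta> gnn by (intro mult_right_mono mult_left_mono) auto
      hence "\<theta> * \<beta>0 * g (x k) \<le> P k" using h by (simp add: algebra_simps)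
      then show "norm (g (x k)) \<le> P k / (\<theta> * \<beta>0)" using \<theta> \<beta>0 gnn by (simp add: field_simps)
    qed
    show "(\<lambda>k. P k / (\<theta> * \<beta>0)) \<longlonglongrightarrow> 0" using tendsto_divide_zero[OF P0] by simp
  qed
  have l2sq: "(\<lambda>k. (norm (Dg (x k)))^2) \<longlonglongrightarrow> 0"
  proof (rule Lim_null_comparison)
    show "eventually (\<lambda>k. norm ((norm (Dg (x k)))^2) \<le> P k / (\<theta> * \<beta>0 / (2 * Lg))) sequentially"
      unfolding eventually_sequentially
    proof (intro exI allI impI)
      fix k assume k: "K \<le> k"
      hence h: "\<alpha> k * \<beta> k * \<theta> / (2 * Lg) * (norm (Dg (x k)))^2 \<le> P k" using comp by blast
      have "\<theta> * \<beta>0 / (2 * Lg) * (norm (Dg (x k)))^2 \<le> \<theta> * (\<alpha> k * \<beta> k) / (2 * Lg) * (norm (Dg (x k)))^2"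
        using Kb0 k \<theta> g_lip(1) by (intro mult_right_mono divide_right_mono mult_left_mono) auto
      hence "\<theta> * \<beta>0 / (2 * Lg) * (norm (Dg (x k)))^2 \<le> P k" using h by (simp add: algebra_simps)
      then show "norm ((norm (Dg (x k)))^2) \<le> P k / (\<theta> * \<beta>0 / (2 * Lg))"
        using \<theta> \<beta>0 g_lip(1) by (simp add: field_simps)
    qed
    show "(\<lambda>k. P k / (\<theta> * \<beta>0 / (2 * Lg))) \<longlonglongrightarrow> 0" by (rule tendsto_divide_zero[OF P0])
  qed
  have l2: "(\<lambda>k. norm (Dg (x k))) \<longlonglongrightarrow> 0"
  proof -
    have "(\<lambda>k. sqrt ((norm (Dg (x k)))^2)) \<longlonglongrightarrow> sqrt 0" by (rule tendsto_real_sqrt[OF l2sq])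
    then show ?thesis by simp
  qed
  have l3: "(\<lambda>k. \<Sum>i\<in>{1..m}. (norm (\<phi> k (i + 1) - \<phi> k i))^2) \<longlonglongrightarrow> 0"
  proof (rule Lim_null_comparison)
    show "eventually (\<lambda>k. norm (\<Sum>i\<in>{1..m}. (norm (\<phi> k (i + 1) - \<phi> k i))^2) \<le> 2 * P k) sequentially"
      unfolding eventually_sequentially
    proof (intro exI[of _ K] allI impI)
      fix n assume "K \<le> n"
      hence "1 / 2 * (\<Sum>i=1..m. (norm (\<phi> n (i + 1) - \<phi> n i))^2) \<le> P n"
        "0 \<le> (\<Sum>i=1..m. (norm (\<phi> n (i + 1) - \<phi> n i))^2)" using comp by blast+
      then show "norm (\<Sum>i\<in>{1..m}. (norm (\<phi> n (i + 1) - \<phi> n i))^2) \<le> 2 * P n"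
        by simp
    qed
    show "(\<lambda>k. 2 * P k) \<longlonglongrightarrow> 0" using tendsto_mult_right_zero[OF P0, of 2] by simp
  qed
  have l4: "(\<lambda>k. norm (x k - \<phi> k 1)) \<longlonglongrightarrow> 0"
  proof (rule Lim_null_comparison)
    show "eventually (\<lambda>k. norm (norm (x k - \<phi> k 1)) \<le> B * norm (Dg (x k))) sequentially"
      unfolding eventually_sequentially
    proof (intro exI allI impI)
      fix k assume k: "K \<le> k"
      hence "\<alpha> k * \<beta> k > 0" "\<alpha> k * \<beta> k < B" using bpos KB K1 by auto
      moreover have "x k - \<phi> k 1 = (\<alpha> k * \<beta> k) *\<^sub>R Dg (x k)" using \<phi>_1 k K1 by simp
      ultimately show "norm (norm (x k - \<phi> k 1)) \<le> B * norm (Dg (x k))"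
        by (simp add: mult_right_mono)
    qed
    show "(\<lambda>k. B * norm (Dg (x k))) \<longlonglongrightarrow> 0" using tendsto_mult_right_zero[OF l2, of B] by simp
  qed
  have cl: "\<forall>z r. strict_mono r \<and> (x \<circ> r) \<longlonglongrightarrow> z \<longrightarrow> z \<in> argmin_set g"
  proof (intro allI impI)
    fix z r assume zr: "strict_mono r \<and> (x \<circ> r) \<longlonglongrightarrow> z"
    have cg: "isCont g z" using has_derivative_continuous[OF g_grad[rule_format, of z]] by simp
    have "(\<lambda>n. g ((x \<circ> r) n)) \<longlonglongrightarrow> g z" using isCont_tendsto_compose[OF cg] zr by blast
    moreover have "(\<lambda>n. g ((x \<circ> r) n)) \<longlonglongrightarrow> 0"
      using LIMSEQ_subseq_LIMSEQ[OF l1, of r] zr by (simp add: o_def)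
    ultimately have "g z = 0" by (rule LIMSEQ_unique)
    then show "z \<in> argmin_set g" using argmin_eq by simp
  qed
  show ?thesis using qf cn s1 s2 s3 l1 l2 l3 l4 cl by blast
qed


end
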